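(* Suppose $k^2$ is not real. Let $u \in C^2(\mathcal{X}, F^i)$ and $f \in C^2(\mathcal{X}, F^{i+1})$ satisfy $M^i(u, f) = 0$ in $\mathcal{X}$. Either of the conditions $t(u) = 0$ and $n(f) = 0$ on $\partial\mathcal{X}$ implies $(u, f) \equiv 0$ in all of $\mathcal{X}$.
   Context: $\mathcal{X}$ is a compact manifold with boundary (with smooth positive volume form), carrying an elliptic complex of first order differential operators $A^i: C^\infty(\mathcal{X},F^i)\to C^\infty(\mathcal{X},F^{i+1})$, $A^{i+1}A^i=0$, between Hermitian vector bundles, with formal adjoints $A^{i*}$. The Maxwell operator at step $i$ is $M^i = \begin{pmatrix} \imath k & A^{i*} \\ A^i & -\imath k \end{pmatrix}$ with $k$ a complex number. $t(u)$ denotes the tangential part of $u$ and $n(f)$ the normal part of $f$ on $\partial\mathcal{X}$ relative to the complex (so that Green's formula $(Au,g)=(u,A^*g)$ holds when $t(u)=0$ or $n(g)=0$). *)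

theory Defs
  imports "HOL-Analysis.Analysis"
begin

text \<open>Abstract rendering of the analytic setting of the paper.
  'u : continuous sections of F^i over X, 'f : continuous sections of F^(i+1).
  Cu, Cf : the subspaces of C^2 sections.  scU, scF : multiplication by complex scalars.
  ipU, ipF : the L2 inner products (u,v) = integral over X of h(u,v) dvol,
  linear in the first and conjugate linear in the second argument.
  A : the first order operator A^i, As : its formal adjoint A^(i*).
  t : tangential part on the boundary, n : normal part on the boundary.\<close>

definition complex_vs :: "(complex \<Rightarrow> 'v::ab_group_add \<Rightarrow> 'v) \<Rightarrow> bool" where
  "complex_vs sc \<longleftrightarrow>
     (\<forall>a b v. sc a (b + v) = sc a b + sc a v) \<and>
     (\<forall>a b v. sc (a + b) v = sc a v + sc b v) \<and>
     (\<forall>a b v. sc a (sc b v) = sc (a * b) v) \<and>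
     (\<forall>v. sc 1 v = v)"

definition hermitian_ip ::
  "(complex \<Rightarrow> 'v::ab_group_add \<Rightarrow> 'v) \<Rightarrow> ('v \<Rightarrow> 'v \<Rightarrow> complex) \<Rightarrow> bool" where
  "hermitian_ip sc ip \<longleftrightarrow>
     (\<forall>u v w. ip (u + v) w = ip u w + ip v w) \<and>
     (\<forall>a u w. ip (sc a u) w = a * ip u w) \<and>
     (\<forall>u w. ip w u = cnj (ip u w)) \<and>
     (\<forall>u. ip u u \<in> \<real> \<and> Re (ip u u) \<ge> 0) \<and>
     (\<forall>u. ip u u = 0 \<longrightarrow> u = 0)"

definition complex_linear ::
  "(complex \<Rightarrow> 'v::ab_group_add \<Rightarrow> 'v) \<Rightarrow> (complex \<Rightarrow> 'w::ab_group_add \<Rightarrow> 'w) \<Rightarrow> 'v set \<Rightarrow> ('v \<Rightarrow> 'w) \<Rightarrow> bool" where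
  "complex_linear scV scW S L \<longleftrightarrow>
     (\<forall>u\<in>S. \<forall>v\<in>S. L (u + v) = L u + L v) \<and> (\<forall>a. \<forall>u\<in>S. L (scV a u) = scW a (L u))"

definition subspace_of :: "(complex \<Rightarrow> 'v::ab_group_add \<Rightarrow> 'v) \<Rightarrow> 'v set \<Rightarrow> bool" where
  "subspace_of sc S \<longleftrightarrow> 0 \<in> S \<and> (\<forall>u\<in>S. \<forall>v\<in>S. u + v \<in> S) \<and> (\<forall>a. \<forall>u\<in>S. sc a u \<in> S)"

text \<open>The data of step i of the complex together with Green's formula
  (A u, g) = (u, A^* g) whenever t(u) = 0 or n(g) = 0.\<close>
definition green_setting ::
  "(complex \<Rightarrow> 'u::ab_group_add \<Rightarrow> 'u) \<Rightarrow> (complex \<Rightarrow> 'f::ab_group_add \<Rightarrow> 'f) \<Rightarrow>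
   ('u \<Rightarrow> 'u \<Rightarrow> complex) \<Rightarrow> ('f \<Rightarrow> 'f \<Rightarrow> complex) \<Rightarrow> 'u set \<Rightarrow> 'f set \<Rightarrow>
   ('u \<Rightarrow> 'f) \<Rightarrow> ('f \<Rightarrow> 'u) \<Rightarrow> ('u \<Rightarrow> 'bt::zero) \<Rightarrow> ('f \<Rightarrow> 'bn::zero) \<Rightarrow> bool" where
  "green_setting scU scF ipU ipF Cu Cf A As t n \<longleftrightarrow>
     complex_vs scU \<and> complex_vs scF \<and> hermitian_ip scU ipU \<and> hermitian_ip scF ipF \<and>
     subspace_of scU Cu \<and> subspace_of scF Cf \<and>
     complex_linear scU scF Cu A \<and> complex_linear scF scU Cf As \<and>
     (\<forall>u\<in>Cu. \<forall>g\<in>Cf. (t u = 0 \<or> n g = 0) \<longrightarrow> ipF (A u) g = ipU u (As g))"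

text \<open>Maxwell operator M^i = [[ik, A^*],[A, -ik]] applied to (u,f).\<close>
definition maxwell ::
  "(complex \<Rightarrow> 'u::ab_group_add \<Rightarrow> 'u) \<Rightarrow> (complex \<Rightarrow> 'f::ab_group_add \<Rightarrow> 'f) \<Rightarrow>
   ('u \<Rightarrow> 'f) \<Rightarrow> ('f \<Rightarrow> 'u) \<Rightarrow> complex \<Rightarrow> 'u \<Rightarrow> 'f \<Rightarrow> 'u \<times> 'f" where
  "maxwell scU scF A As k u f = (scU (\<i> * k) u + As f, A u + scF (- \<i> * k) f)"

end

theory Submission
  imports Defs
begin

lemma sc_zero: assumes "complex_vs sc" shows "sc 0 v = 0"
proof -
  have "sc (0+0) v = sc 0 v + sc 0 v" using assms unfolding complex_vs_def by blast
  thus ?thesis by simp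
qed

lemma sc_neg: assumes "complex_vs sc" shows "sc a v + sc (-a) v = 0"
proof -
  have "sc (a + -a) v = sc a v + sc (-a) v" using assms unfolding complex_vs_def by blast
  thus ?thesis using sc_zero[OF assms] by simp
qed

theorem lemma3p1:
  fixes scU :: "complex \<Rightarrow> 'u::ab_group_add \<Rightarrow> 'u" and scF :: "complex \<Rightarrow> 'f::ab_group_add \<Rightarrow> 'f"
    and ipU :: "'u \<Rightarrow> 'u \<Rightarrow> complex" and ipF :: "'f \<Rightarrow> 'f \<Rightarrow> complex"
    and Cu :: "'u set" and Cf :: "'f set" and A :: "'u \<Rightarrow> 'f" and As :: "'f \<Rightarrow> 'u"
    and t :: "'u \<Rightarrow> 'bt::zero" and n :: "'f \<Rightarrow> 'bn::zero"
    and k :: complex and u :: 'u and f :: 'f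
  assumes "green_setting scU scF ipU ipF Cu Cf A As t n"
    and "k\<^sup>2 \<notin> \<real>"
    and "u \<in> Cu" and "f \<in> Cf"
    and "maxwell scU scF A As k u f = (0, 0)"
    and "t u = 0 \<or> n f = 0"
  shows "u = 0 \<and> f = 0"
proof -
  have vsU: "complex_vs scU" and vsF: "complex_vs scF"
    and hU: "hermitian_ip scU ipU" and hF: "hermitian_ip scF ipF"
    and gr: "ipF (A u) f = ipU u (As f)"
    using assms(1,3,4,6) unfolding green_setting_def by auto
  have e1: "scU (\<i> * k) u + As f = 0" and e2: "A u + scF (- \<i> * k) f = 0"
    using assms(5) unfolding maxwell_def by auto
  have "scF (\<i> * k) f + scF (- (\<i> * k)) f = 0" by (rule sc_neg[OF vsF])
  hence a1: "scF (\<i> * k) f = - scF (- (\<i> * k)) f" by (rule eq_neg_iff_add_eq_0[THEN iffD2])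
  have "A u = - scF (- \<i> * k) f" using e2 by (rule eq_neg_iff_add_eq_0[THEN iffD2])
  hence Au: "A u = scF (\<i> * k) f" using a1 by (metis mult_minus_left)
  have "scU (\<i> * k) u + scU (- (\<i> * k)) u = 0" by (rule sc_neg[OF vsU])
  hence a2: "scU (- (\<i> * k)) u = - scU (\<i> * k) u" by (metis add.commute eq_neg_iff_add_eq_0)
  have "As f = - scU (\<i> * k) u" using e1 by (metis add.commute eq_neg_iff_add_eq_0)
  hence Asf: "As f = scU (- (\<i> * k)) u" using a2 by simp
  have hF2: "\<And>a v w. ipF (scF a v) w = a * ipF v w" using hF unfolding hermitian_ip_def by blast
  have hU2: "\<And>a v w. ipU (scU a v) w = a * ipU v w" using hU unfolding hermitian_ip_def by blast
  have hU3: "\<And>v w. ipU w v = cnj (ipU v w)" using hU unfolding hermitian_ip_def by blast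
  have hFr: "\<And>v. ipF v v \<in> \<real> \<and> Re (ipF v v) \<ge> 0" using hF unfolding hermitian_ip_def by blast
  have hUr: "\<And>v. ipU v v \<in> \<real> \<and> Re (ipU v v) \<ge> 0" using hU unfolding hermitian_ip_def by blast
  have hF0: "\<And>v. ipF v v = 0 \<Longrightarrow> v = 0" using hF unfolding hermitian_ip_def by blast
  have hU0: "\<And>v. ipU v v = 0 \<Longrightarrow> v = 0" using hU unfolding hermitian_ip_def by blast
  have L: "ipF (A u) f = \<i> * k * ipF f f" unfolding Au by (rule hF2)
  have "ipU u (As f) = cnj (ipU (scU (- (\<i> * k)) u) u)" unfolding Asf by (rule hU3)
  also have "\<dots> = cnj (- (\<i> * k) * ipU u u)" by (simp only: hU2)
  finally have R: "ipU u (As f) = \<i> * cnj k * cnj (ipU u u)" by simp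
  obtain F where F: "ipF f f = complex_of_real F" "F \<ge> 0"
    using hFr[of f] by (metis Reals_cases Re_complex_of_real)
  obtain U where U: "ipU u u = complex_of_real U" "U \<ge> 0"
    using hUr[of u] by (metis Reals_cases Re_complex_of_real)
  have eq: "k * F = cnj k * U" using gr L R F U by simp
  have k0: "k \<noteq> 0" using assms(2) by auto
  have "cmod (k * F) = cmod (cnj k * U)" using eq by simp
  hence "cmod k * F = cmod k * U" using F U by (simp add: norm_mult)
  hence FU: "F = U" using k0 by simp
  show ?thesis
  proof (cases "U = 0")
    case True
    hence "ipU u u = 0" "ipF f f = 0" using U F FU by auto
    thus ?thesis using hU0 hF0 by blast
  next
    case False
    hence "k = cnj k" using eq FU by simp
    hence "k \<in> \<real>" using Reals_cnj_iff by metis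
    hence "k\<^sup>2 \<in> \<real>" by simp
    thus ?thesis using assms(2) by blast
  qed
qed

end
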